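(* There exists a (necessarily discontinuous) map $f:[0,1]\to[0,1]$ such that the chain components poset $(\mathfrak{C}_f,\preceq)$ is order isomorphic to $([0,1]\cap\mathbb{Q},\le)$.
   Context: No regularity is assumed on maps. For a map $f:[0,1]\to[0,1]$ with the usual metric: an $\varepsilon$-chain from $x$ to $y$ is a finite sequence $x_0=x,\dots,x_n=y$, $n\ge1$, with $|f(x_i)-x_{i+1}|<\varepsilon$; $x\,\mathcal{C}\,y$ iff for every $\varepsilon>0$ there is an $\varepsilon$-chain from $x$ to $y$; $CR_f=\{x:x\,\mathcal{C}\,x\}$; $x\,E\,y$ iff $x\,\mathcal{C}\,y$ and $y\,\mathcal{C}\,x$; $\mathfrak{C}_f=CR_f/E$ is the set of chain components, partially ordered by $[x]\preceq[y]$ iff $y\,\mathcal{C}\,x$. *)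

theory Defs
  imports "HOL-Analysis.Analysis"
begin

text \<open>Maps on the unit interval are represented as total functions real => real
  mapping [0,1] into [0,1]; only their values on [0,1] matter. No regularity is assumed.\<close>

definition eps_chain :: "(real \<Rightarrow> real) \<Rightarrow> real \<Rightarrow> real \<Rightarrow> real \<Rightarrow> bool" where
  "eps_chain f e x y \<longleftrightarrow>
     (\<exists>n::nat. n \<ge> 1 \<and> (\<exists>xs :: nat \<Rightarrow> real.
        xs 0 = x \<and> xs n = y \<and> (\<forall>i\<le>n. xs i \<in> {0..1}) \<and>
        (\<forall>i<n. \<bar>f (xs i) - xs (Suc i)\<bar> < e)))"

definition chain_rel :: "(real \<Rightarrow> real) \<Rightarrow> real \<Rightarrow> real \<Rightarrow> bool" where
  "chain_rel f x y \<longleftrightarrow> (\<forall>e>0. eps_chain f e x y)"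

definition chain_recurrent :: "(real \<Rightarrow> real) \<Rightarrow> real set" where
  "chain_recurrent f = {x \<in> {0..1}. chain_rel f x x}"

definition chain_equiv :: "(real \<Rightarrow> real) \<Rightarrow> (real \<times> real) set" where
  "chain_equiv f = {(x, y). x \<in> chain_recurrent f \<and> y \<in> chain_recurrent f \<and>
                            chain_rel f x y \<and> chain_rel f y x}"

definition chain_components :: "(real \<Rightarrow> real) \<Rightarrow> real set set" where
  "chain_components f = chain_recurrent f // chain_equiv f"

text \<open>[x] \<preceq> [y] iff y C x (independent of representatives).\<close>
definition comp_le :: "(real \<Rightarrow> real) \<Rightarrow> real set \<Rightarrow> real set \<Rightarrow> bool" where
  "comp_le f A B \<longleftrightarrow> (\<exists>x\<in>A. \<exists>y\<in>B. chain_rel f y x)"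

end

theory Submission
  imports Defs
begin

lemma trap:
  fixes f :: "real \<Rightarrow> real"
  assumes cl: "\<And>z. z < T \<Longrightarrow> f z + e \<le> T" and st: "f x + e \<le> T"
    and ch: "eps_chain f e x y"
  shows "y < T"
proof -
  from ch obtain n xs where n: "n \<ge> 1" "xs 0 = x" "xs n = y"
    and st2: "\<forall>i<n. \<bar>f (xs i) - xs (Suc i)\<bar> < e" unfolding eps_chain_def by blast
  have "\<forall>i. 1 \<le> i \<longrightarrow> i \<le> n \<longrightarrow> xs i < T"
  proof (intro allI)
    fix i show "1 \<le> i \<longrightarrow> i \<le> n \<longrightarrow> xs i < T"
    proof (induction i)
      case 0 then show ?case by simp
    next
      case (Suc i)
      show ?case
      proof (intro impI)
        assume "Suc i \<le> n"
        then have a: "\<bar>f (xs i) - xs (Suc i)\<bar> < e" using st2 by simp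
        have "f (xs i) + e \<le> T"
        proof (cases "i = 0")
          case True then show ?thesis using st n by simp
        next
          case False then have "xs i < T" using Suc \<open>Suc i \<le> n\<close> by simp
          then show ?thesis using cl by blast
        qed
        then show "xs (Suc i) < T" using a by linarith
      qed
    qed
  qed
  then show ?thesis using n by auto
qed

locale constr =
  fixes q :: "nat \<Rightarrow> real"
  assumes qbij: "bij_betw q UNIV ({0..1} \<inter> \<rat>)"
begin

definition w :: "nat \<Rightarrow> real" where "w k = (1/2)^Suc k"
definition c :: "nat \<Rightarrow> real" where
  "c n = (1/2) * (\<Sum>k. if q k < q n then w k else 0)"
definition \<rho> :: "nat \<Rightarrow> real" where "\<rho> n = (1/2)^(n+2)"
definition idx :: "real \<Rightarrow> nat" where "idx = inv_into UNIV q"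
definition n0 :: nat where "n0 = idx 0"
definition lev :: "nat \<Rightarrow> real \<Rightarrow> real" where
  "lev n x = (let s = frac (\<rho> n / (x - c n)) in if s \<in> \<rat> \<and> s \<le> q n then s else 0)"
definition f :: "real \<Rightarrow> real" where
  "f x = (if x \<in> range c then x
          else if (\<exists>n. c n < x \<and> x < c n + \<rho> n)
               then c (idx (lev (SOME n. c n < x \<and> x < c n + \<rho> n) x))
          else c n0)"

lemma q_inj: "inj q" using qbij by (simp add: bij_betw_def)
lemma q_range: "q k \<in> {0..1} \<inter> \<rat>" using qbij by (auto simp: bij_betw_def)
lemma q_idx: "l \<in> {0..1} \<inter> \<rat> \<Longrightarrow> q (idx l) = l"
  unfolding idx_def using qbij by (metis bij_betw_def f_inv_into_f)
lemma idx_q: "idx (q k) = k" unfolding idx_def using q_inj by simp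
lemma q_eq: "q a = q b \<longleftrightarrow> a = b" using q_inj by (auto dest: injD)

lemma w_summable: "summable w" unfolding w_def
  using summable_geometric[of "1/2::real"] by (simp add: summable_mult)

lemma summ_ind: "summable (\<lambda>k. if P k then w k else 0)"
  by (rule summable_comparison_test'[OF w_summable]) (auto simp: w_def)

lemma c_nonneg: "0 \<le> c n"
  unfolding c_def by (auto intro!: suminf_nonneg summ_ind simp: w_def)

lemma w_sum: "(\<Sum>k. w k) = 1"
proof -
  have "(\<lambda>k. (1/2) * (1/2::real)^k) sums ((1/2) * (1 / (1 - 1/2)))"
    by (rule sums_mult) (rule geometric_sums, simp)
  then show ?thesis unfolding w_def by (simp add: sums_iff)
qed

lemma c_le: "c n \<le> 1/2"
proof -
  have "(\<Sum>k. if q k < q n then w k else 0) \<le> (\<Sum>k. w k)"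
    by (rule suminf_le) (auto intro: summ_ind w_summable simp: w_def)
  then show ?thesis unfolding c_def w_sum by simp
qed

lemma rho_pos: "0 < \<rho> n" by (simp add: \<rho>_def)
lemma rho_le: "\<rho> n \<le> 1/4" unfolding \<rho>_def
  by (simp add: power_add) (metis power_le_one less_eq_real_def half_gt_zero_iff zero_less_one divide_le_eq_1 mult_le_cancel_right1 le_divide_eq_1 one_le_numeral zero_le_divide_1_iff)

lemma gap: assumes "q m < q n" shows "c m + \<rho> m \<le> c n"
proof -
  let ?A = "\<lambda>k. if q k < q n then w k else 0" and ?B = "\<lambda>k. if q k < q m then w k else 0"
  have "c n - c m = (1/2) * (\<Sum>k. ?A k - ?B k)"
    unfolding c_def by (simp add: suminf_diff[OF summ_ind summ_ind] right_diff_distrib)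
  moreover have "sum (\<lambda>k. ?A k - ?B k) {m} \<le> (\<Sum>k. ?A k - ?B k)"
    by (rule sum_le_suminf) (use assms in \<open>auto intro!: summable_diff summ_ind simp: w_def\<close>)
  ultimately have "c n - c m \<ge> (1/2) * w m" using assms by simp
  then show ?thesis by (simp add: w_def \<rho>_def)
qed

lemma mono_c: assumes "q k \<le> q r" shows "c k \<le> c r"
proof (cases "q k = q r")
  case True then show ?thesis using q_eq by simp
next
  case False then have "q k < q r" using assms by simp
  from gap[OF this] rho_pos[of k] show ?thesis by simp
qed

lemma c_lt: assumes "q k < q r" shows "c k < c r"
  using gap[OF assms] rho_pos[of k] by simp

lemma c_eq: "c a = c b \<longleftrightarrow> a = b"
proof
  assume h: "c a = c b"
  show "a = b"
  proof (rule ccontr)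
    assume "a \<noteq> b" then have "q a \<noteq> q b" using q_eq by simp
    then have "q a < q b \<or> q b < q a" by linarith
    then show False using c_lt h by fastforce
  qed
qed simp

lemma gap_unique:
  assumes "c n < z" "z < c n + \<rho> n" "c m < z" "z < c m + \<rho> m" shows "n = m"
proof (rule ccontr)
  assume "n \<noteq> m" then have "q n \<noteq> q m" using q_eq by simp
  then have "q n < q m \<or> q m < q n" by linarith
  then show False using gap[of n m] gap[of m n] assms by force
qed

lemma gap_not_c:
  assumes "c n < z" "z < c n + \<rho> n" shows "z \<notin> range c"
proof
  assume "z \<in> range c" then obtain m where m: "z = c m" by auto
  have "q m < q n \<or> q m = q n \<or> q n < q m" by linarith
  then show False using gap[of m n] gap[of n m] rho_pos[of m] assms m q_eq by force
qed

lemma q_n0: "q n0 = 0" unfolding n0_def by (rule q_idx) simp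

lemma c_n0: "c n0 = 0"
proof -
  have "\<And>k. \<not> q k < 0" using q_range by (meson IntD1 atLeastAtMost_iff not_less)
  then show ?thesis unfolding c_def q_n0 by simp
qed

lemma f_c: "f (c n) = c n" unfolding f_def by simp

lemma lev_in: "lev n x \<in> {0..1} \<inter> \<rat> \<and> lev n x \<le> q n"
  using q_range[of n] frac_lt_1[of "\<rho> n / (x - c n)"]
  unfolding lev_def Let_def by auto

lemma f_gap:
  assumes "c n < x" "x < c n + \<rho> n" shows "f x = c (idx (lev n x))"
proof -
  have "(SOME n. c n < x \<and> x < c n + \<rho> n) = n"
    by (rule some_equality) (use assms gap_unique in auto)
  then show ?thesis unfolding f_def using assms gap_not_c[OF assms] by auto
qed

lemma f_other:
  assumes "x \<notin> range c" "\<not> (\<exists>n. c n < x \<and> x < c n + \<rho> n)" shows "f x = c n0"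
  unfolding f_def using assms by auto

lemma f_gap_le:
  assumes "c n < x" "x < c n + \<rho> n" shows "f x \<le> c n"
proof -
  have "q (idx (lev n x)) \<le> q n" using lev_in[of n x] q_idx by simp
  then show ?thesis using f_gap[OF assms] mono_c by simp
qed

lemma L: assumes "z < c r + \<rho> r" shows "f z \<le> c r"
proof (cases "z \<in> range c")
  case True
  then obtain m where m: "z = c m" by auto
  have "q m \<le> q r" using gap[of r m] assms m by force
  then show ?thesis using m f_c mono_c by simp
next
  case False
  show ?thesis
  proof (cases "\<exists>n. c n < z \<and> z < c n + \<rho> n")
    case True
    then obtain m where m: "c m < z" "z < c m + \<rho> m" by auto
    have "q m \<le> q r" using gap[of r m] assms m by force
    then show ?thesis using f_gap_le[OF m] mono_c[of m r] by simp
  next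
    case F2: False
    have "q n0 \<le> q r" using q_n0 q_range[of r] by simp
    then show ?thesis using f_other[OF False F2] mono_c by simp
  qed
qed

lemma in01_c: "c n \<in> {0..1}" using c_nonneg[of n] c_le[of n] by simp

lemma chain_self: "chain_rel f (c n) (c n)"
  unfolding chain_rel_def eps_chain_def
proof (intro allI impI)
  fix e :: real assume "e > 0"
  then show "\<exists>N\<ge>1. \<exists>xs. xs 0 = c n \<and> xs N = c n \<and> (\<forall>i\<le>N. xs i \<in> {0..1}) \<and>
        (\<forall>i<N. \<bar>f (xs i) - xs (Suc i)\<bar> < e)"
    by (intro exI[of _ 1] conjI exI[of _ "\<lambda>i. c n"]) (use c_nonneg[of n] c_le[of n] in \<open>auto simp: f_c\<close>)
qed

lemma chain_down_strict: assumes "q m < q n" shows "chain_rel f (c n) (c m)"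
  unfolding chain_rel_def eps_chain_def
proof (intro allI impI)
  fix e :: real assume e: "e > 0"
  define K :: nat where "K = nat (ceiling (\<rho> n / e)) + 2"
  define r where "r = q m"
  have r: "0 \<le> r" "r < 1" "r \<in> \<rat>" "r \<le> q n"
    using q_range[of m] q_range[of n] assms unfolding r_def by auto
  have K2: "real K \<ge> 2" unfolding K_def by simp
  have Kb: "\<rho> n / e < real K"
  proof -
    have "\<rho> n / e \<le> real (nat (ceiling (\<rho> n / e)))" by (rule real_nat_ceiling_ge)
    then show ?thesis unfolding K_def by simp
  qed
  define x where "x = c n + \<rho> n / (K + r)"
  have pos: "K + r > 1" using K2 r by simp
  have x1: "c n < x" unfolding x_def using pos rho_pos[of n] by simp
  have x2: "x < c n + \<rho> n" unfolding x_def using pos rho_pos[of n]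
    by (simp add: divide_less_eq)
  have "\<rho> n / (x - c n) = K + r" unfolding x_def using pos rho_pos[of n] by simp
  then have "frac (\<rho> n / (x - c n)) = r"
    using r by (metis frac_add_of_int_left frac_eq_id atLeastLessThan_iff of_int_of_nat_eq)
  then have "lev n x = r" unfolding lev_def using r by simp
  then have fx: "f x = c m" using f_gap[OF x1 x2] idx_q r_def by simp
  have "\<rho> n / (K + r) < e"
  proof -
    have "\<rho> n / (K + r) \<le> \<rho> n / K" using rho_pos[of n] r K2
      by (intro divide_left_mono) auto
    also have "\<dots> < e" using Kb e K2 by (simp add: divide_less_eq mult.commute)
    finally show ?thesis .
  qed
  then have d1: "\<bar>f (c n) - x\<bar> < e" unfolding f_c x_def using pos rho_pos[of n] by simp
  have x01: "x \<in> {0..1}" using x1 x2 c_nonneg[of n] c_le[of n] rho_le[of n] by simp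
  show "\<exists>N\<ge>1. \<exists>xs. xs 0 = c n \<and> xs N = c m \<and> (\<forall>i\<le>N. xs i \<in> {0..1}) \<and>
        (\<forall>i<N. \<bar>f (xs i) - xs (Suc i)\<bar> < e)"
  proof (intro exI[of _ 2] conjI exI[of _ "\<lambda>i. if i = 0 then c n else if i = 1 then x else c m"])
    show "\<forall>i\<le>2. (if i = 0 then c n else if i = 1 then x else c m) \<in> {0..1}"
      using x01 in01_c by auto
    show "\<forall>i<2. \<bar>f (if i = 0 then c n else if i = 1 then x else c m) -
         (if Suc i = 0 then c n else if Suc i = 1 then x else c m)\<bar> < e"
    proof (intro allI impI)
      fix i :: nat assume "i < 2"
      then have "i = 0 \<or> i = 1" by auto
      then show "\<bar>f (if i = 0 then c n else if i = 1 then x else c m) -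
         (if Suc i = 0 then c n else if Suc i = 1 then x else c m)\<bar> < e"
        using d1 fx e by auto
    qed
  qed auto
qed

lemma chain_down: assumes "q m \<le> q n" shows "chain_rel f (c n) (c m)"
proof (cases "q m = q n")
  case True then show ?thesis using chain_self q_eq by simp
next
  case False then show ?thesis using chain_down_strict assms by simp
qed

lemma trap_c: assumes "0 < t" "t \<le> \<rho> r" "f x \<le> c r" "c r + t \<le> y"
  shows "\<not> chain_rel f x y"
proof
  assume "chain_rel f x y"
  then have ch: "eps_chain f t x y" using assms unfolding chain_rel_def by simp
  have "y < c r + t"
  proof (rule trap[OF _ _ ch])
    fix z assume "z < c r + t"
    then show "f z + t \<le> c r + t" using L[of z r] assms by simp
  qed (use assms in simp)
  then show False using assms by simp
qed

lemma no_up: assumes "q m < q n" shows "\<not> chain_rel f (c m) (c n)"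
  by (rule trap_c[of "\<rho> m" m]) (use rho_pos gap[OF assms] f_c in auto)

lemma nonrec: assumes "x \<in> {0..1}" "x \<notin> range c" shows "\<not> chain_rel f x x"
proof (cases "\<exists>n. c n < x \<and> x < c n + \<rho> n")
  case True
  then obtain n where n: "c n < x" "x < c n + \<rho> n" by auto
  define k where "k = idx (lev n x)"
  have fx: "f x = c k" using f_gap[OF n] k_def by simp
  have qk: "q k \<le> q n" using lev_in[of n x] q_idx k_def by simp
  show ?thesis
  proof (cases "q k = q n")
    case True
    then have "k = n" using q_eq by simp
    show ?thesis
      by (rule trap_c[of "x - c n" n]) (use n fx \<open>k = n\<close> in auto)
  next
    case False
    then have "q k < q n" using qk by simp
    show ?thesis
      by (rule trap_c[of "\<rho> k" k]) (use n fx rho_pos gap[OF \<open>q k < q n\<close>] in auto)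
  qed
next
  case False
  have fx: "f x = c n0" using f_other[OF assms(2) False] .
  have "x \<noteq> c n0" using assms by auto
  then have "x > 0" using assms c_n0 by auto
  then have "x \<ge> c n0 + \<rho> n0" using False c_n0 by (metis add_0 not_le)
  then show ?thesis by (intro trap_c[of "\<rho> n0" n0]) (use rho_pos fx in auto)
qed

lemma chain_iff: "chain_rel f (c a) (c b) \<longleftrightarrow> q b \<le> q a"
  using chain_down no_up by (meson not_le)

lemma f_maps: "f x \<in> {0..1}"
proof -
  have "f x \<in> range c" unfolding f_def by auto
  then obtain n where "f x = c n" by auto
  then show ?thesis using c_nonneg[of n] c_le[of n] by simp
qed

lemma cr: "chain_recurrent f = range c"
proof
  show "chain_recurrent f \<subseteq> range c"
    unfolding chain_recurrent_def using nonrec by blast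
  show "range c \<subseteq> chain_recurrent f"
  proof
    fix x assume "x \<in> range c"
    then obtain n where "x = c n" by auto
    then show "x \<in> chain_recurrent f"
      unfolding chain_recurrent_def using chain_self[of n] c_nonneg[of n] c_le[of n] by simp
  qed
qed

lemma ceq: "chain_equiv f = Id_on (range c)"
proof -
  have "\<And>a b. chain_rel f (c a) (c b) \<and> chain_rel f (c b) (c a) \<longleftrightarrow> a = b"
    using chain_iff q_eq by (meson order_antisym order_refl)
  show ?thesis
  proof (intro set_eqI iffI)
    fix p assume "p \<in> chain_equiv f"
    then obtain a b where p: "p = (c a, c b)" "chain_rel f (c a) (c b)" "chain_rel f (c b) (c a)"
      unfolding chain_equiv_def cr by auto
    then have "a = b" using chain_iff q_eq by (meson order_antisym)
    then show "p \<in> Id_on (range c)" using p by (auto simp: Id_on_def)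
  next
    fix p assume "p \<in> Id_on (range c)"
    then obtain a where p: "p = (c a, c a)" by (auto simp: Id_on_def)
    then show "p \<in> chain_equiv f" unfolding chain_equiv_def cr using chain_self[of a] by simp
  qed
qed

lemma comps: "chain_components f = (\<lambda>n. {c n}) ` UNIV"
  unfolding chain_components_def cr ceq quotient_def by auto

definition phi :: "real set \<Rightarrow> real" where "phi A = q (SOME n. A = {c n})"

lemma phi_c: "phi {c n} = q n"
proof -
  have "(SOME m. {c n} = {c m}) = n"
    by (rule some_equality) (auto simp: c_eq)
  then show ?thesis unfolding phi_def by simp
qed

lemma result: "f ` {0..1} \<subseteq> {0..1} \<and>
     (\<exists>\<phi> :: real set \<Rightarrow> real.
        bij_betw \<phi> (chain_components f) ({0..1} \<inter> \<rat>) \<and>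
        (\<forall>A\<in>chain_components f. \<forall>B\<in>chain_components f.
            comp_le f A B \<longleftrightarrow> \<phi> A \<le> \<phi> B))"
proof (intro conjI exI[of _ phi])
  show "f ` {0..1} \<subseteq> {0..1}" using f_maps by auto
  show "bij_betw phi (chain_components f) ({0..1} \<inter> \<rat>)"
    unfolding comps bij_betw_def
  proof
    show "inj_on phi (range (\<lambda>n. {c n}))"
      by (rule inj_onI) (auto simp: phi_c q_eq)
    have "phi ` range (\<lambda>n. {c n}) = range q" by (auto simp: phi_c image_iff)
    then show "phi ` range (\<lambda>n. {c n}) = {0..1} \<inter> \<rat>" using qbij by (simp add: bij_betw_def)
  qed
  show "\<forall>A\<in>chain_components f. \<forall>B\<in>chain_components f. comp_le f A B = (phi A \<le> phi B)"
    unfolding comps comp_le_def by (auto simp: phi_c chain_iff)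
qed

end

lemma infinite_Q01: "infinite ({0..1} \<inter> \<rat> :: real set)"
proof -
  have "inj (\<lambda>n::nat. 1 / (real n + 1))" by (rule injI) simp
  then have "infinite (range (\<lambda>n::nat. 1 / (real n + 1)))" by (simp add: range_inj_infinite)
  moreover have "range (\<lambda>n::nat. 1 / (real n + 1)) \<subseteq> {0..1} \<inter> \<rat>" by auto
  ultimately show ?thesis using infinite_super by blast
qed

theorem theorem3p1:
  shows "\<exists>f :: real \<Rightarrow> real. f ` {0..1} \<subseteq> {0..1} \<and>
     (\<exists>\<phi> :: real set \<Rightarrow> real.
        bij_betw \<phi> (chain_components f) ({0..1} \<inter> \<rat>) \<and>
        (\<forall>A\<in>chain_components f. \<forall>B\<in>chain_components f.
            comp_le f A B \<longleftrightarrow> \<phi> A \<le> \<phi> B))"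
proof -
  have "countable ({0..1} \<inter> \<rat> :: real set)" using countable_rat by (rule countable_subset[rotated]) auto
  then have "bij_betw (from_nat_into ({0..1} \<inter> \<rat> :: real set)) UNIV ({0..1} \<inter> \<rat>)"
    using infinite_Q01 by (rule bij_betw_from_nat_into)
  then interpret constr "from_nat_into ({0..1} \<inter> \<rat> :: real set)" by unfold_locales
  show ?thesis using result by blast
qed

end
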